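(* Let $q\in\mathbb{C}$, $q\neq0,1$, not a root of unity, and let $(R,\sigma,\theta^{*})$ be the non-commutative qsi algebra $R=\mathbb{C}\langle t,Q,Q^{-1}\rangle/(Qt-qtQ)$ with $\sigma(t^iQ^j)=q^{i+j}t^iQ^j$ and $\theta^{(1)}(t^iQ^j)=[i]_q\,t^{i-1}Q^j$ ($i\in\mathbb{N}$, $j\in\mathbb{Z}$), $\theta^{(m)}=\frac{1}{[m]_q!}(\theta^{(1)})^m$. Then $R$ is simple as a qsi algebra: the only two-sided ideals $I\subseteq R$ satisfying $\sigma(I)\subseteq I$ and $\theta^{(m)}(I)\subseteq I$ for all $m$ are $0$ and $R$.
   Context: $[m]_q=1+q+\dots+q^{m-1}$ (with $[0]_q=0$), $[m]_q!=[1]_q\cdots[m]_q$. The structure is that of a qsi algebra: $\sigma$ is the $\mathbb{C}$-algebra automorphism with $\sigma(t)=qt$, $\sigma(Q)=qQ$, and $\theta^{(1)}$ is the $\mathbb{C}$-linear map with $\theta^{(1)}(t)=1$, $\theta^{(1)}(Q)=0$ satisfying the twisted Leibniz rule $\theta^{(1)}(ab)=\theta^{(1)}(a)b+\sigma(a)\theta^{(1)}(b)$; the displayed formulas on the basis $t^iQ^j$ follow. *)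

theory Defs
  imports Complex_Main
begin

text \<open>Elements of R = C<t,Q,Q^-1>/(Qt - qtQ) are represented by their coefficient
  functions on the basis t^i Q^j (i nat, j int), required to have finite support.\<close>

definition qsupp :: "(nat \<times> int \<Rightarrow> complex) \<Rightarrow> (nat \<times> int) set" where
  "qsupp f = {x. f x \<noteq> 0}"

definition Rcar :: "(nat \<times> int \<Rightarrow> complex) set" where
  "Rcar = {f. finite (qsupp f)}"

text \<open>Multiplication: (t^a Q^b)(t^c Q^d) = q^(b c) t^(a+c) Q^(b+d), since Q t = q t Q.\<close>
definition rmul :: "complex \<Rightarrow> (nat \<times> int \<Rightarrow> complex) \<Rightarrow> (nat \<times> int \<Rightarrow> complex) \<Rightarrow> (nat \<times> int \<Rightarrow> complex)" where
  "rmul q f g = (\<lambda>(i, j). \<Sum>x\<in>qsupp f. \<Sum>y\<in>qsupp g.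
      if fst x + fst y = i \<and> snd x + snd y = j
      then f x * g y * q powi (snd x * int (fst y)) else 0)"

definition radd :: "(nat \<times> int \<Rightarrow> complex) \<Rightarrow> (nat \<times> int \<Rightarrow> complex) \<Rightarrow> (nat \<times> int \<Rightarrow> complex)" where
  "radd f g = (\<lambda>x. f x + g x)"

definition rneg :: "(nat \<times> int \<Rightarrow> complex) \<Rightarrow> (nat \<times> int \<Rightarrow> complex)" where
  "rneg f = (\<lambda>x. - f x)"

definition rzero :: "nat \<times> int \<Rightarrow> complex" where
  "rzero = (\<lambda>_. 0)"

definition qint :: "complex \<Rightarrow> nat \<Rightarrow> complex" where
  "qint q m = (\<Sum>k<m. q ^ k)"

definition qfact :: "complex \<Rightarrow> nat \<Rightarrow> complex" where
  "qfact q m = (\<Prod>k=1..m. qint q k)"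

definition qsigma :: "complex \<Rightarrow> (nat \<times> int \<Rightarrow> complex) \<Rightarrow> (nat \<times> int \<Rightarrow> complex)" where
  "qsigma q f = (\<lambda>(i, j). q powi (int i + j) * f (i, j))"

definition theta1 :: "complex \<Rightarrow> (nat \<times> int \<Rightarrow> complex) \<Rightarrow> (nat \<times> int \<Rightarrow> complex)" where
  "theta1 q f = (\<lambda>(i, j). qint q (Suc i) * f (Suc i, j))"

definition thetam :: "complex \<Rightarrow> nat \<Rightarrow> (nat \<times> int \<Rightarrow> complex) \<Rightarrow> (nat \<times> int \<Rightarrow> complex)" where
  "thetam q m f = (\<lambda>x. (1 / qfact q m) * ((theta1 q ^^ m) f x))"

definition two_sided_ideal :: "complex \<Rightarrow> (nat \<times> int \<Rightarrow> complex) set \<Rightarrow> bool" where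
  "two_sided_ideal q I \<longleftrightarrow> I \<subseteq> Rcar \<and> rzero \<in> I \<and>
     (\<forall>x\<in>I. \<forall>y\<in>I. radd x y \<in> I) \<and> (\<forall>x\<in>I. rneg x \<in> I) \<and>
     (\<forall>r\<in>Rcar. \<forall>x\<in>I. rmul q r x \<in> I \<and> rmul q x r \<in> I)"

definition qsi_ideal :: "complex \<Rightarrow> (nat \<times> int \<Rightarrow> complex) set \<Rightarrow> bool" where
  "qsi_ideal q I \<longleftrightarrow> two_sided_ideal q I \<and> (\<forall>x\<in>I. qsigma q x \<in> I) \<and>
     (\<forall>m. \<forall>x\<in>I. thetam q m x \<in> I)"

end

theory Submission
  imports Defs
begin

definition monom1 :: "nat \<Rightarrow> int \<Rightarrow> complex \<Rightarrow> (nat \<times> int \<Rightarrow> complex)" where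
  "monom1 a b c = (\<lambda>x. if x = (a, b) then c else 0)"

lemma monom1_Rcar: "monom1 a b c \<in> Rcar"
proof -
  have "qsupp (monom1 a b c) \<subseteq> {(a,b)}" by (auto simp: qsupp_def monom1_def)
  thus ?thesis unfolding Rcar_def using finite_subset by blast
qed

lemma rmul_mono_left:
  assumes g: "g \<in> Rcar"
  shows "rmul q (monom1 a b c) g (i, j) =
     (if a \<le> i then c * g (i - a, j - b) * q powi (b * int (i - a)) else 0)"
proof (cases "c = 0")
  case True
  have "qsupp (monom1 a b c) = {}" using True by (auto simp: qsupp_def monom1_def)
  thus ?thesis using True by (simp add: rmul_def)
next
  case False
  have S: "qsupp (monom1 a b c) = {(a,b)}" using False by (auto simp: qsupp_def monom1_def)
  have fin: "finite (qsupp g)" using g by (simp add: Rcar_def)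
  have "rmul q (monom1 a b c) g (i, j) = (\<Sum>y\<in>qsupp g.
      if a + fst y = i \<and> b + snd y = j then c * g y * q powi (b * int (fst y)) else 0)"
    unfolding rmul_def S by (simp add: monom1_def cong: if_cong)
  also have "\<dots> = (\<Sum>y\<in>qsupp g. if a \<le> i then (if (i - a, j - b) = y then c * g y * q powi (b * int (fst y)) else 0) else 0)"
    by (rule sum.cong) auto
  also have "\<dots> = (if a \<le> i then c * g (i - a, j - b) * q powi (b * int (i - a)) else 0)"
  proof (cases "a \<le> i")
    case True
    then show ?thesis using fin by (simp add: qsupp_def)
  next
    case False
    then show ?thesis by simp
  qed
  finally show ?thesis .
qed

lemma rmul_one_right:
  assumes g: "r \<in> Rcar"
  shows "rmul q r (monom1 0 0 1) = r"
proof
  fix x :: "nat \<times> int"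
  obtain i j where x: "x = (i, j)" by (cases x)
  have S: "qsupp (monom1 0 0 1) = {(0,0)}" by (auto simp: qsupp_def monom1_def)
  have fin: "finite (qsupp r)" using g by (simp add: Rcar_def)
  have "rmul q r (monom1 0 0 1) (i, j) = (\<Sum>y\<in>qsupp r. if (i, j) = y then r y else 0)"
    unfolding rmul_def S by (auto simp: monom1_def intro!: sum.cong)
  also have "\<dots> = r (i, j)" using fin by (auto simp: qsupp_def)
  finally show "rmul q r (monom1 0 0 1) x = r x" using x by simp
qed

lemma qint_nz:
  assumes "q \<noteq> 1" "\<forall>n::nat. n > 0 \<longrightarrow> q ^ n \<noteq> 1" "k > 0"
  shows "qint q k \<noteq> 0"
proof -
  have "qint q k = (1 - q^k) / (1 - q)" using assms(1) by (simp add: qint_def sum_gp_strict)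
  moreover have "1 - q^k \<noteq> 0" using assms(2,3) by auto
  moreover have "1 - q \<noteq> 0" using assms(1) by auto
  ultimately show ?thesis by simp
qed

lemma qfact_nz:
  assumes "q \<noteq> 1" "\<forall>n::nat. n > 0 \<longrightarrow> q ^ n \<noteq> 1"
  shows "qfact q m \<noteq> 0"
  unfolding qfact_def using qint_nz[OF assms] by (simp add: prod_zero_iff)

lemma theta_pow:
  "(theta1 q ^^ m) f (i, j) = (\<Prod>k\<in>{Suc i..i+m}. qint q k) * f (i + m, j)"
proof (induction m arbitrary: i)
  case 0
  then show ?case by simp
next
  case (Suc m)
  have "(theta1 q ^^ Suc m) f (i, j) = qint q (Suc i) * (theta1 q ^^ m) f (Suc i, j)"
    by (simp add: theta1_def)
  also have "\<dots> = qint q (Suc i) * (\<Prod>k\<in>{Suc (Suc i)..Suc i+m}. qint q k) * f (Suc i + m, j)"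
    using Suc by simp
  also have "qint q (Suc i) * (\<Prod>k\<in>{Suc (Suc i)..Suc i+m}. qint q k) = (\<Prod>k\<in>{Suc i..i+Suc m}. qint q k)"
    by (subst prod.atLeast_Suc_atMost[of "Suc i"]) auto
  finally show ?case by simp
qed

lemma powi_inj:
  fixes q :: complex
  assumes "q \<noteq> 0" "\<forall>n::nat. n > 0 \<longrightarrow> q ^ n \<noteq> 1" "q powi a = q powi b"
  shows "a = b"
proof (rule ccontr)
  assume ne: "a \<noteq> b"
  have "q powi (a - b) = 1" using assms(1,3) by (simp add: power_int_diff)
  show False
  proof (cases "a - b \<ge> 0")
    case True
    then have "q ^ nat (a - b) = 1" using \<open>q powi (a - b) = 1\<close> by (simp add: power_int_def)
    moreover have "nat (a - b) > 0" using True ne by simp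
    ultimately show False using assms(2) by blast
  next
    case False
    then have "inverse q ^ nat (b - a) = 1" using \<open>q powi (a - b) = 1\<close> by (simp add: power_int_def)
    then have "q ^ nat (b - a) = 1" by (simp add: power_inverse)
    moreover have "nat (b - a) > 0" using False by simp
    ultimately show False using assms(2) by blast
  qed
qed

lemma reduce:
  fixes q :: complex
  assumes q0: "q \<noteq> 0" and nr: "\<forall>n::nat. n > 0 \<longrightarrow> q ^ n \<noteq> 1" and id: "qsi_ideal q I"
  shows "g \<in> I \<Longrightarrow> qsupp g \<noteq> {} \<Longrightarrow> qsupp g \<subseteq> {x. fst x = 0}
    \<Longrightarrow> \<exists>j c. c \<noteq> 0 \<and> monom1 0 j c \<in> I"
proof (induction "card (qsupp g)" arbitrary: g rule: less_induct)
  case less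
  have IR: "I \<subseteq> Rcar" and add: "\<forall>x\<in>I. \<forall>y\<in>I. radd x y \<in> I" and neg: "\<forall>x\<in>I. rneg x \<in> I"
    and mul: "\<forall>r\<in>Rcar. \<forall>x\<in>I. rmul q r x \<in> I \<and> rmul q x r \<in> I"
    and sig: "\<forall>x\<in>I. qsigma q x \<in> I"
    using id unfolding qsi_ideal_def two_sided_ideal_def by auto
  have gR: "g \<in> Rcar" using less.prems IR by auto
  have fin: "finite (qsupp g)" using gR by (simp add: Rcar_def)
  obtain x0 where x0: "x0 \<in> qsupp g" using less.prems by auto
  obtain j0 where x0e: "x0 = (0, j0)" using x0 less.prems by (cases x0) auto
  show ?case
  proof (cases "qsupp g = {x0}")
    case True
    have "g = monom1 0 j0 (g (0, j0))"
    proof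
      fix x show "g x = monom1 0 j0 (g (0, j0)) x"
        using True x0e by (cases "x = (0, j0)") (auto simp: monom1_def qsupp_def)
    qed
    moreover have "g (0, j0) \<noteq> 0" using x0 x0e by (simp add: qsupp_def)
    ultimately show ?thesis using less.prems by metis
  next
    case False
    define h where "h = radd (qsigma q g) (rneg (rmul q (monom1 0 0 (q powi j0)) g))"
    have hI: "h \<in> I" unfolding h_def using add neg mul sig less.prems monom1_Rcar by blast
    have hx: "h x = (q powi (int (fst x) + snd x) - q powi j0) * g x" for x
    proof -
      obtain i j where x: "x = (i, j)" by (cases x)
      show ?thesis unfolding h_def x radd_def rneg_def qsigma_def
        using rmul_mono_left[OF gR, of q 0 0 "q powi j0" i j] by (simp add: algebra_simps)
    qed
    have hs: "qsupp h = qsupp g - {x0}"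
    proof
      show "qsupp h \<subseteq> qsupp g - {x0}" using hx x0e by (auto simp: qsupp_def)
      show "qsupp g - {x0} \<subseteq> qsupp h"
      proof
        fix x assume xa: "x \<in> qsupp g - {x0}"
        then have "fst x = 0" using less.prems by auto
        then obtain j where xe: "x = (0, j)" by (cases x) auto
        have "j \<noteq> j0" using xa xe x0e by auto
        then have "q powi j \<noteq> q powi j0" using powi_inj[OF q0 nr] by blast
        then show "x \<in> qsupp h" using xa xe hx by (simp add: qsupp_def)
      qed
    qed
    have "card (qsupp h) < card (qsupp g)" unfolding hs using fin x0 by (rule card_Diff1_less)
    moreover have "qsupp h \<noteq> {}" using hs False x0 by auto
    moreover have "qsupp h \<subseteq> {x. fst x = 0}" using hs less.prems by auto
    ultimately show ?thesis using less.hyps hI by blast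
  qed
qed

theorem mainTheorem4:
  fixes q :: complex and I :: "(nat \<times> int \<Rightarrow> complex) set"
  assumes "q \<noteq> 0" and "q \<noteq> 1" and "\<forall>n::nat. n > 0 \<longrightarrow> q ^ n \<noteq> 1"
    and "qsi_ideal q I"
  shows "I = {rzero} \<or> I = Rcar"
proof (cases "I \<subseteq> {rzero}")
  case True
  have "rzero \<in> I" using assms(4) unfolding qsi_ideal_def two_sided_ideal_def by auto
  then show ?thesis using True by auto
next
  case False
  then obtain f where fI: "f \<in> I" and fnz: "f \<noteq> rzero" by auto
  have IR: "I \<subseteq> Rcar"
    and mul: "\<forall>r\<in>Rcar. \<forall>x\<in>I. rmul q r x \<in> I \<and> rmul q x r \<in> I"
    and th: "\<forall>m. \<forall>x\<in>I. thetam q m x \<in> I"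
    using assms(4) unfolding qsi_ideal_def two_sided_ideal_def by auto
  have fin: "finite (qsupp f)" using fI IR by (auto simp: Rcar_def)
  have ne: "qsupp f \<noteq> {}" using fnz by (auto simp: qsupp_def rzero_def)
  define N where "N = Max (fst ` qsupp f)"
  have Nmax: "fst x \<le> N" if "x \<in> qsupp f" for x unfolding N_def using fin that by auto
  have "N \<in> fst ` qsupp f" unfolding N_def using Max_in[of "fst ` qsupp f"] fin ne by auto
  then obtain x1 where x1: "x1 \<in> qsupp f" "fst x1 = N" by auto
  define g where "g = thetam q N f"
  have gI: "g \<in> I" unfolding g_def using th fI by blast
  have qf: "qfact q N \<noteq> 0" using qfact_nz[OF assms(2,3)] .
  have gx: "g (i, j) = (if i = 0 then f (N, j) else 0)" for i j
  proof (cases "i = 0")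
    case True
    have "(\<Prod>k\<in>{Suc 0..0+N}. qint q k) = qfact q N" by (simp add: qfact_def)
    then show ?thesis using True qf unfolding g_def thetam_def theta_pow by simp
  next
    case False
    have "(i + N, j) \<notin> qsupp f" using Nmax[of "(i+N, j)"] False by auto
    then have "f (i + N, j) = 0" by (simp add: qsupp_def)
    then show ?thesis using False unfolding g_def thetam_def theta_pow by simp
  qed
  have "(0, snd x1) \<in> qsupp g" using x1 gx by (cases x1) (auto simp: qsupp_def)
  then have gne: "qsupp g \<noteq> {}" by auto
  have gs: "qsupp g \<subseteq> {x. fst x = 0}"
  proof
    fix x assume "x \<in> qsupp g"
    then show "x \<in> {x. fst x = 0}" using gx by (cases x) (auto simp: qsupp_def split: if_splits)
  qed
  obtain j c where c: "c \<noteq> 0" "monom1 0 j c \<in> I"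
    using reduce[OF assms(1,3,4) gI gne gs] by blast
  have "rmul q (monom1 0 (-j) (1/c)) (monom1 0 j c) = monom1 0 0 1"
  proof
    fix x :: "nat \<times> int"
    obtain i k where x: "x = (i, k)" by (cases x)
    show "rmul q (monom1 0 (-j) (1/c)) (monom1 0 j c) x = monom1 0 0 1 x"
      unfolding x rmul_mono_left[OF monom1_Rcar] using c(1) by (auto simp: monom1_def)
  qed
  then have oneI: "monom1 0 0 1 \<in> I" using mul c(2) monom1_Rcar by metis
  have "Rcar \<subseteq> I"
  proof
    fix r assume r: "r \<in> Rcar"
    then have "rmul q r (monom1 0 0 1) \<in> I" using mul oneI by blast
    then show "r \<in> I" using rmul_one_right[OF r] by simp
  qed
  then show ?thesis using IR by blast
qed

end
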